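(* Let $\lambda>0$ and let $\Omega_\lambda$ be the set of functions $f$ analytic in $\mathbb{D}=\{z:|z|<1\}$ with $f(0)=0$, $f'(0)=1$, such that $zf'(z)-f(z)=\lambda z^2\phi(z)$ for $z\in\mathbb{D}$ for some analytic $\phi$ in $\mathbb{D}$ with $|\phi(z)|\le1$. The radius of starlikeness of $\Omega_\lambda$ is $\frac{1}{2\lambda}$. Further, if $f\in\Omega_\lambda$, then for $z\in\mathbb{D}$, \[|z|-\lambda|z|^2\le|f(z)|\le|z|+\lambda|z|^2,\qquad 1-2\lambda|z|\le|f'(z)|\le1+2\lambda|z|.\] For $z\in\mathbb{D}$, $z\neq0$, equality occurs in both inequalities if and only if $f(z)=z+\lambda\eta z^2$ with $|\eta|=1$.
   Context: The radius of starlikeness of a class $E$ of normalized analytic functions on $\mathbb{D}$ is $\inf_{f\in E}\gamma_f$, where $\gamma_f$ is the largest $\gamma$ such that $f$ is starlike (i.e. $\mathrm{Re}(zf'(z)/f(z))>0$) in every disk $|z|<r$, $0<r\le\gamma$. *)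

theory Defs
  imports "HOL-Analysis.Analysis"
begin

definition Omega :: "real \<Rightarrow> (complex \<Rightarrow> complex) set" where
  "Omega lam = {f. f holomorphic_on ball 0 1 \<and> f 0 = 0 \<and> deriv f 0 = 1 \<and>
     (\<exists>\<phi>. \<phi> holomorphic_on ball 0 1 \<and> (\<forall>z\<in>ball 0 1. norm (\<phi> z) \<le> 1) \<and>
          (\<forall>z\<in>ball 0 1. z * deriv f z - f z = complex_of_real lam * z\<^sup>2 * \<phi> z))}"

text \<open>f is starlike in the disk of radius r: Re (z f'(z)/f(z)) > 0 for 0 < |z| < r
  (at z = 0 the quotient is 1 by normalization).\<close>
definition starlike_disk :: "(complex \<Rightarrow> complex) \<Rightarrow> real \<Rightarrow> bool" where
  "starlike_disk f r \<longleftrightarrow> (\<forall>z. 0 < norm z \<and> norm z < r \<longrightarrow> 0 < Re (z * deriv f z / f z))"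

definition starlike_radius_fun :: "(complex \<Rightarrow> complex) \<Rightarrow> real" where
  "starlike_radius_fun f = Sup {\<gamma>. 0 < \<gamma> \<and> \<gamma> \<le> 1 \<and> (\<forall>r. 0 < r \<and> r \<le> \<gamma> \<longrightarrow> starlike_disk f r)}"

definition radius_starlikeness :: "(complex \<Rightarrow> complex) set \<Rightarrow> real" where
  "radius_starlikeness E = Inf (starlike_radius_fun ` E)"

end

theory Submission imports Defs "HOL-Complex_Analysis.Complex_Analysis" begin

lemma omega_repr:
  assumes fO: "f \<in> Omega lam"
  obtains g \<phi> where "g holomorphic_on ball 0 1" "g 0 = 1"
    "\<And>z. z \<in> ball 0 1 \<Longrightarrow> f z = z * g z"
    "\<And>z. z \<in> ball 0 1 \<Longrightarrow> (g has_field_derivative (of_real lam * \<phi> z)) (at z)"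
    "\<And>z. z \<in> ball 0 1 \<Longrightarrow> norm (\<phi> z) \<le> 1"
    "\<And>z. z \<in> ball 0 1 \<Longrightarrow> deriv f z = g z + z * of_real lam * \<phi> z"
proof -
  from fO obtain \<phi> where holf: "f holomorphic_on ball 0 1" and f0: "f 0 = 0" and df0: "deriv f 0 = 1"
    and holp: "\<phi> holomorphic_on ball 0 1" and pb: "\<forall>z\<in>ball 0 1. norm (\<phi> z) \<le> 1"
    and eq: "\<forall>z\<in>ball 0 1. z * deriv f z - f z = complex_of_real lam * z\<^sup>2 * \<phi> z"
    unfolding Omega_def by blast
  define g where "g = (\<lambda>z. if z = 0 then deriv f 0 else (f z - f 0) / (z - 0))"
  have holg: "g holomorphic_on ball 0 1"
    unfolding g_def by (rule pole_lemma[OF holf]) auto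
  have g0: "g 0 = 1" using df0 by (simp add: g_def)
  have fg: "f z = z * g z" if "z \<in> ball 0 1" for z
    using f0 by (cases "z = 0") (auto simp: g_def)
  have dfz: "(f has_field_derivative deriv f z) (at z)" if "z \<in> ball 0 1" for z
    using holf that by (meson holomorphic_derivI open_ball)
  have dg1: "(g has_field_derivative (of_real lam * \<phi> z)) (at z)" if z: "z \<in> ball 0 1" "z \<noteq> 0" for z
  proof -
    have "((\<lambda>w. f w / w) has_field_derivative ((deriv f z * z - f z * 1) / (z * z))) (at z)"
      by (rule DERIV_divide[OF dfz[OF z(1)] DERIV_ident]) (use z in auto)
    moreover have "(deriv f z * z - f z * 1) / (z * z) = of_real lam * \<phi> z"
      using eq z by (auto simp: field_simps power2_eq_square)
    ultimately have "((\<lambda>w. f w / w) has_field_derivative (of_real lam * \<phi> z)) (at z)" by simp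
    then show ?thesis
      by (rule has_field_derivative_transform_within_open[where S="ball 0 1 - {0}"])
         (use z f0 in \<open>auto simp: g_def\<close>)
  qed
  have dgeq: "deriv g z = of_real lam * \<phi> z" if "z \<in> ball 0 1" for z
  proof -
    have "(\<lambda>z. deriv g z - of_real lam * \<phi> z) z = 0"
    proof (rule analytic_continuation[where f="\<lambda>z. deriv g z - of_real lam * \<phi> z" and S="ball 0 1" and U="ball 0 1 - {0}" and \<xi>=0])
      show "(\<lambda>z. deriv g z - of_real lam * \<phi> z) holomorphic_on ball 0 1"
        by (intro holomorphic_on_diff holomorphic_deriv holg holomorphic_on_mult holomorphic_on_const holp open_ball)
      show "(0::complex) islimpt ball 0 1 - {0}"
        using islimpt_punctured[of "0::complex" "ball 0 1"] islimpt_ball[of "0::complex" 0 1] by auto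
      show "deriv g w - of_real lam * \<phi> w = 0" if "w \<in> ball 0 1 - {0}" for w
        using dg1[of w] that DERIV_imp_deriv by auto
    qed (use that in auto)
    then show ?thesis by simp
  qed
  have dg: "(g has_field_derivative (of_real lam * \<phi> z)) (at z)" if "z \<in> ball 0 1" for z
    using dgeq[OF that] holg that
    by (metis holomorphic_derivI open_ball)
  have dfeq: "deriv f z = g z + z * of_real lam * \<phi> z" if z: "z \<in> ball 0 1" for z
  proof (cases "z = 0")
    case True then show ?thesis using df0 g0 by simp
  next
    case False
    have "z * deriv f z = z * (g z + z * of_real lam * \<phi> z)"
      using eq z fg[OF z] by (auto simp: algebra_simps power2_eq_square)
    then show ?thesis using False by simp
  qed
  show ?thesis
    by (rule that[OF holg g0 fg dg _ dfeq]) (use pb in auto)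
qed

lemma omega_facts:
  assumes fO: "f \<in> Omega lam" and lam: "0 < lam"
  obtains h \<phi> where "h holomorphic_on ball 0 1" "h 0 = 0"
    "\<And>z. z \<in> ball 0 1 \<Longrightarrow> norm (h z) \<le> norm z"
    "\<And>z. z \<in> ball 0 1 \<Longrightarrow> f z = z * (1 + of_real lam * h z)"
    "\<And>z. z \<in> ball 0 1 \<Longrightarrow> deriv f z = 1 + of_real lam * h z + of_real lam * z * \<phi> z"
    "\<And>z. z \<in> ball 0 1 \<Longrightarrow> norm (\<phi> z) \<le> 1"
proof -
  obtain g \<phi> where holg: "g holomorphic_on ball 0 1" and g0: "g 0 = 1"
    and fg: "\<And>z. z \<in> ball 0 1 \<Longrightarrow> f z = z * g z"
    and dg: "\<And>z. z \<in> ball 0 1 \<Longrightarrow> (g has_field_derivative (of_real lam * \<phi> z)) (at z)"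
    and pb: "\<And>z. z \<in> ball 0 1 \<Longrightarrow> norm (\<phi> z) \<le> 1"
    and df: "\<And>z. z \<in> ball 0 1 \<Longrightarrow> deriv f z = g z + z * of_real lam * \<phi> z"
    using omega_repr[OF fO] by blast
  define h where "h = (\<lambda>z. (g z - 1) / of_real lam)"
  have holh: "h holomorphic_on ball 0 1"
    unfolding h_def by (intro holomorphic_intros holg) (use lam in auto)
  have h0: "h 0 = 0" by (simp add: h_def g0)
  have lip: "norm (g z - g 0) \<le> lam * norm (z - 0)" if "z \<in> ball 0 1" for z
  proof (rule field_differentiable_bound[where S="ball 0 1"])
    show "(g has_field_derivative (of_real lam * \<phi> w)) (at w within ball 0 1)" if "w \<in> ball 0 1" for w
      using dg[OF that] by (rule has_field_derivative_at_within)
    show "norm (of_real lam * \<phi> w) \<le> lam" if "w \<in> ball 0 1" for w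
      using pb[OF that] lam by (simp add: norm_mult mult_left_le)
  qed (use that in auto)
  have hb: "norm (h z) \<le> norm z" if "z \<in> ball 0 1" for z
  proof -
    have "norm (h z) = norm (g z - 1) / lam" using lam by (simp add: h_def norm_divide)
    also have "\<dots> \<le> lam * norm z / lam" using lip[OF that] g0 lam by (intro divide_right_mono) auto
    finally show ?thesis using lam by simp
  qed
  have gh: "g z = 1 + of_real lam * h z" for z using lam by (simp add: h_def)
  show ?thesis
  proof (rule that[OF holh h0 hb])
    show "f z = z * (1 + of_real lam * h z)" if "z \<in> ball 0 1" for z using fg[OF that] gh by simp
    show "deriv f z = 1 + of_real lam * h z + of_real lam * z * \<phi> z" if "z \<in> ball 0 1" for z
      using df[OF that] gh by (simp add: algebra_simps)
  qed (use pb in auto)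
qed

lemma fam_deriv: "deriv (\<lambda>w. w + c * w\<^sup>2) z = 1 + 2 * c * (z::complex)"
  by (rule DERIV_imp_deriv) (auto intro!: derivative_eq_intros simp: algebra_simps)

lemma fam_omega:
  assumes "norm \<eta> = 1"
  shows "(\<lambda>w. w + complex_of_real lam * \<eta> * w\<^sup>2) \<in> Omega lam"
  unfolding Omega_def
proof (intro CollectI conjI)
  show "(\<lambda>w. w + complex_of_real lam * \<eta> * w\<^sup>2) holomorphic_on ball 0 1"
    by (intro holomorphic_intros)
  show "deriv (\<lambda>w. w + complex_of_real lam * \<eta> * w\<^sup>2) 0 = 1"
    using fam_deriv[of "complex_of_real lam * \<eta>" 0] by simp
  show "\<exists>\<phi>. \<phi> holomorphic_on ball 0 1 \<and> (\<forall>z\<in>ball 0 1. cmod (\<phi> z) \<le> 1) \<and>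
     (\<forall>z\<in>ball 0 1. z * deriv (\<lambda>w. w + complex_of_real lam * \<eta> * w\<^sup>2) z - (z + complex_of_real lam * \<eta> * z\<^sup>2) =
        complex_of_real lam * z\<^sup>2 * \<phi> z)"
    by (rule exI[of _ "\<lambda>_. \<eta>"]) (simp only: fam_deriv, auto simp: assms algebra_simps power2_eq_square)
qed simp

lemma norm_aux:
  fixes a b :: complex and l :: real
  shows "norm (1 + a) \<le> 1 + norm a" "1 - norm a \<le> norm (1 + a)"
    "norm (1 + a + b) \<le> 1 + norm a + norm b" "1 - norm a - norm b \<le> norm (1 + a + b)"
proof -
  show "norm (1 + a) \<le> 1 + norm a" using norm_triangle_ineq[of 1 a] by simp
  have "norm (1::complex) \<le> norm (1 + a) + norm (-a)" using norm_triangle_ineq[of "1 + a" "-a"] by simp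
  then show "1 - norm a \<le> norm (1 + a)" by simp
  show "norm (1 + a + b) \<le> 1 + norm a + norm b"
    using norm_triangle_ineq[of "1 + a" b] norm_triangle_ineq[of 1 a] by simp
  have "norm (1::complex) \<le> norm (1 + a + b) + norm (-a - b)" using norm_triangle_ineq[of "1 + a + b" "-a - b"] by simp
  moreover have "norm (-a - b) \<le> norm a + norm b" using norm_triangle_ineq4[of "-a" b] by simp
  ultimately show "1 - norm a - norm b \<le> norm (1 + a + b)" by simp
qed

lemma omega_all:
  assumes fO: "f \<in> Omega lam" and lam: "0 < lam" and z: "z \<in> ball 0 1"
  shows "norm z - lam * (norm z)\<^sup>2 \<le> norm (f z) \<and> norm (f z) \<le> norm z + lam * (norm z)\<^sup>2 \<and>
       1 - 2 * lam * norm z \<le> norm (deriv f z) \<and> norm (deriv f z) \<le> 1 + 2 * lam * norm z"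
   "z \<noteq> 0 \<Longrightarrow>
       (norm (f z) = norm z - lam * (norm z)\<^sup>2 \<or> norm (f z) = norm z + lam * (norm z)\<^sup>2 \<or>
        norm (deriv f z) = 1 - 2 * lam * norm z \<or> norm (deriv f z) = 1 + 2 * lam * norm z) \<Longrightarrow>
       (\<exists>\<eta>. norm \<eta> = 1 \<and> (\<forall>w\<in>ball 0 1. f w = w + complex_of_real lam * \<eta> * w\<^sup>2))"
   "norm z < 1 / (2 * lam) \<Longrightarrow> z \<noteq> 0 \<Longrightarrow> 0 < Re (z * deriv f z / f z)"
proof -
  obtain h \<phi> where holh: "h holomorphic_on ball 0 1" and h0: "h 0 = 0"
    and hb: "\<And>z. z \<in> ball 0 1 \<Longrightarrow> norm (h z) \<le> norm z"
    and fh: "\<And>z. z \<in> ball 0 1 \<Longrightarrow> f z = z * (1 + of_real lam * h z)"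
    and dfh: "\<And>z. z \<in> ball 0 1 \<Longrightarrow> deriv f z = 1 + of_real lam * h z + of_real lam * z * \<phi> z"
    and pb: "\<And>z. z \<in> ball 0 1 \<Longrightarrow> norm (\<phi> z) \<le> 1"
    using omega_facts[OF fO lam] by metis
  define a where "a = of_real lam * h z"
  define b where "b = of_real lam * z * \<phi> z"
  have na: "norm a = lam * norm (h z)" using lam by (simp add: a_def norm_mult)
  have nb: "norm b \<le> lam * norm z"
  proof -
    have "norm b = lam * norm z * norm (\<phi> z)" using lam by (simp add: b_def norm_mult)
    also have "\<dots> \<le> lam * norm z * 1" using pb[OF z] lam by (intro mult_left_mono) auto
    finally show ?thesis by simp
  qed
  have hz: "norm (h z) \<le> norm z" using hb[OF z] .
  have naz: "norm a \<le> lam * norm z" using na hz lam by (simp add: mult_left_mono)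
  have fz: "norm (f z) = norm z * norm (1 + a)" using fh[OF z] by (simp add: a_def norm_mult)
  have dz: "norm (deriv f z) = norm (1 + a + b)" using dfh[OF z] by (simp add: a_def b_def)
  note N = norm_aux(1,2)[of a] norm_aux(3,4)[of a b]
  have sq: "lam * (norm z)\<^sup>2 = norm z * (lam * norm z)" by (simp add: power2_eq_square)
  have sq1: "norm z * (1 - lam * norm z) = norm z - lam * (norm z)\<^sup>2" by (simp add: algebra_simps power2_eq_square)
  have sq2: "norm z * (1 + lam * norm z) = norm z + lam * (norm z)\<^sup>2" by (simp add: algebra_simps power2_eq_square)
  show "norm z - lam * (norm z)\<^sup>2 \<le> norm (f z) \<and> norm (f z) \<le> norm z + lam * (norm z)\<^sup>2 \<and>
       1 - 2 * lam * norm z \<le> norm (deriv f z) \<and> norm (deriv f z) \<le> 1 + 2 * lam * norm z"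
  proof (intro conjI)
    have "norm z * (1 - lam * norm z) \<le> norm z * norm (1 + a)"
      using N naz by (intro mult_left_mono) auto
    then show "norm z - lam * (norm z)\<^sup>2 \<le> norm (f z)" using fz sq1 by linarith
    have "norm z * norm (1 + a) \<le> norm z * (1 + lam * norm z)"
      using N naz by (intro mult_left_mono) auto
    then show "norm (f z) \<le> norm z + lam * (norm z)\<^sup>2" using fz sq2 by linarith
    show "1 - 2 * lam * norm z \<le> norm (deriv f z)" using N naz nb dz by linarith
    show "norm (deriv f z) \<le> 1 + 2 * lam * norm z" using N naz nb dz by linarith
  qed
  show "z \<noteq> 0 \<Longrightarrow>
       (norm (f z) = norm z - lam * (norm z)\<^sup>2 \<or> norm (f z) = norm z + lam * (norm z)\<^sup>2 \<or>
        norm (deriv f z) = 1 - 2 * lam * norm z \<or> norm (deriv f z) = 1 + 2 * lam * norm z) \<Longrightarrow>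
       (\<exists>\<eta>. norm \<eta> = 1 \<and> (\<forall>w\<in>ball 0 1. f w = w + complex_of_real lam * \<eta> * w\<^sup>2))"
  proof -
    assume z0: "z \<noteq> 0" and disj: "norm (f z) = norm z - lam * (norm z)\<^sup>2 \<or> norm (f z) = norm z + lam * (norm z)\<^sup>2 \<or>
        norm (deriv f z) = 1 - 2 * lam * norm z \<or> norm (deriv f z) = 1 + 2 * lam * norm z"
    have nzp: "0 < norm z" using z0 by simp
    have "lam * norm z \<le> norm a"
    proof -
      { assume "norm (f z) = norm z - lam * (norm z)\<^sup>2"
        then have "norm z * norm (1 + a) = norm z * (1 - lam * norm z)" using fz sq1 by linarith
        then have "norm (1 + a) = 1 - lam * norm z" using nzp by simp
        then have ?thesis using N by linarith }
      moreover
      { assume "norm (f z) = norm z + lam * (norm z)\<^sup>2"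
        then have "norm z * norm (1 + a) = norm z * (1 + lam * norm z)" using fz sq2 by linarith
        then have "norm (1 + a) = 1 + lam * norm z" using nzp by simp
        then have ?thesis using N by linarith }
      ultimately show ?thesis using disj N nb dz by linarith
    qed
    then have "lam * norm z \<le> lam * norm (h z)" using na by simp
    then have hzeq: "norm (h z) = norm z" using hz lam by simp
    have "\<exists>\<alpha>. (\<forall>z. norm z < 1 \<longrightarrow> h z = \<alpha> * z) \<and> norm \<alpha> = 1"
    proof (rule Schwarz_Lemma(3)[OF holh h0, of 0])
      show "norm (h w) < 1" if "norm w < 1" for w using hb[of w] that by simp
      show "(\<exists>z. norm z < 1 \<and> z \<noteq> 0 \<and> norm (h z) = norm z) \<or> norm (deriv h 0) = 1"
        using z z0 hzeq by auto
    qed simp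
    then obtain \<alpha> where al: "\<And>z. norm z < 1 \<Longrightarrow> h z = \<alpha> * z" "norm \<alpha> = 1" by blast
    show ?thesis
    proof (intro exI conjI ballI)
      show "norm \<alpha> = 1" by fact
      fix w :: complex assume w: "w \<in> ball 0 1"
      then show "f w = w + complex_of_real lam * \<alpha> * w\<^sup>2"
        using fh[OF w] al(1)[of w] by (simp add: algebra_simps power2_eq_square)
    qed
  qed
  show "norm z < 1 / (2 * lam) \<Longrightarrow> z \<noteq> 0 \<Longrightarrow> 0 < Re (z * deriv f z / f z)"
  proof -
    assume zr: "norm z < 1 / (2 * lam)" and z0: "z \<noteq> 0"
    have lz: "lam * norm z < 1/2" using zr lam by (simp add: field_simps)
    have G: "norm (1 + a) > 1/2" using N naz lz by linarith
    then have G0: "1 + a \<noteq> 0" by auto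
    have "z * deriv f z / f z = (1 + a + b) / (1 + a)"
      using fh[OF z] dfh[OF z] z0 by (simp add: a_def b_def)
    also have "\<dots> = 1 + b / (1 + a)" using G0 by (simp add: field_simps)
    finally have eq: "z * deriv f z / f z = 1 + b / (1 + a)" .
    have "norm (b / (1 + a)) = norm b / norm (1 + a)" by (simp add: norm_divide)
    also have "\<dots> < 1" using G nb lz by (simp add: divide_less_eq)
    finally have "norm (b / (1 + a)) < 1" .
    moreover have "- norm (b / (1 + a)) \<le> Re (b / (1 + a))" using abs_Re_le_cmod[of "b / (1 + a)"] by linarith
    ultimately show ?thesis using eq by simp
  qed
qed


lemma starlike_omega:
  assumes fO: "f \<in> Omega lam" and lam: "0 < lam" and r: "r \<le> min 1 (1 / (2 * lam))"
  shows "starlike_disk f r"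
  unfolding starlike_disk_def
proof (intro allI impI)
  fix z :: complex assume "0 < norm z \<and> norm z < r"
  then have "z \<in> ball 0 1" "norm z < 1 / (2 * lam)" "z \<noteq> 0" using r by auto
  then show "0 < Re (z * deriv f z / f z)" using omega_all(3)[OF fO lam] by blast
qed

lemma radius_ge:
  assumes fO: "f \<in> Omega lam" and lam: "0 < lam"
  shows "min 1 (1 / (2 * lam)) \<le> starlike_radius_fun f"
  unfolding starlike_radius_fun_def
proof (rule cSup_upper)
  show "min 1 (1 / (2 * lam)) \<in> {\<gamma>. 0 < \<gamma> \<and> \<gamma> \<le> 1 \<and> (\<forall>r. 0 < r \<and> r \<le> \<gamma> \<longrightarrow> starlike_disk f r)}"
    using lam starlike_omega[OF fO lam] by auto
  show "bdd_above {\<gamma>. 0 < \<gamma> \<and> \<gamma> \<le> 1 \<and> (\<forall>r. 0 < r \<and> r \<le> \<gamma> \<longrightarrow> starlike_disk f r)}"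
    by (rule bdd_aboveI[of _ 1]) auto
qed

lemma radius_f0:
  assumes lam: "0 < lam"
  shows "starlike_radius_fun (\<lambda>w. w + complex_of_real lam * (-1) * w\<^sup>2) \<le> min 1 (1 / (2 * lam))"
  unfolding starlike_radius_fun_def
proof (rule cSup_least)
  let ?f = "\<lambda>w. w + complex_of_real lam * (-1) * w\<^sup>2"
  have fO: "?f \<in> Omega lam" by (rule fam_omega) simp
  show "{\<gamma>. 0 < \<gamma> \<and> \<gamma> \<le> 1 \<and> (\<forall>r. 0 < r \<and> r \<le> \<gamma> \<longrightarrow> starlike_disk ?f r)} \<noteq> {}"
    using lam starlike_omega[OF fO lam] by (intro ex_in_conv[THEN iffD1] exI[of _ "min 1 (1 / (2 * lam))"]) auto
  fix \<gamma> assume "\<gamma> \<in> {\<gamma>. 0 < \<gamma> \<and> \<gamma> \<le> 1 \<and> (\<forall>r. 0 < r \<and> r \<le> \<gamma> \<longrightarrow> starlike_disk ?f r)}"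
  then have g: "0 < \<gamma>" "\<gamma> \<le> 1" "starlike_disk ?f \<gamma>" by auto
  show "\<gamma> \<le> min 1 (1 / (2 * lam))"
  proof (rule ccontr)
    assume "\<not> \<gamma> \<le> min 1 (1 / (2 * lam))"
    then have lt: "1 / (2 * lam) < \<gamma>" using g by auto
    define z where "z = complex_of_real (1 / (2 * lam))"
    have nz: "norm z = 1 / (2 * lam)" unfolding z_def norm_of_real using lam by simp
    have "deriv ?f z = 1 + 2 * (complex_of_real lam * (-1)) * z" by (rule fam_deriv)
    also have "\<dots> = 0" using lam by (simp add: z_def field_simps)
    finally have "Re (z * deriv ?f z / ?f z) = 0" by simp
    moreover have "0 < Re (z * deriv ?f z / ?f z)"
    proof -
      have "0 < norm z" using nz lam by simp
      moreover have "norm z < \<gamma>" using nz lt by simp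
      ultimately show ?thesis using g(3)[unfolded starlike_disk_def, rule_format, of z] by blast
    qed
    ultimately show False by simp
  qed
qed

lemma radius_main:
  assumes lam: "0 < lam"
  shows "radius_starlikeness (Omega lam) = min 1 (1 / (2 * lam))"
  unfolding radius_starlikeness_def
proof (rule cInf_eq_minimum)
  let ?f = "\<lambda>w. w + complex_of_real lam * (-1) * w\<^sup>2"
  have fO: "?f \<in> Omega lam" by (rule fam_omega) simp
  have "starlike_radius_fun ?f = min 1 (1 / (2 * lam))"
    using radius_f0[OF lam] radius_ge[OF fO lam] by linarith
  then show "min 1 (1 / (2 * lam)) \<in> starlike_radius_fun ` Omega lam"
    using fO by (intro image_eqI[where x="?f"]) (simp_all only:)
  show "min 1 (1 / (2 * lam)) \<le> x" if "x \<in> starlike_radius_fun ` Omega lam" for x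
  proof -
    from that obtain g where "g \<in> Omega lam" "x = starlike_radius_fun g" by (rule imageE)
    then show ?thesis using radius_ge[OF _ lam] by simp
  qed
qed

lemma extremal:
  assumes lam: "0 < lam" and z: "z \<in> ball 0 1" "z \<noteq> 0"
  shows "\<exists>\<eta>. norm \<eta> = 1 \<and> (\<lambda>w. w + complex_of_real lam * \<eta> * w\<^sup>2) \<in> Omega lam \<and>
          norm (z + complex_of_real lam * \<eta> * z\<^sup>2) = norm z + lam * (norm z)\<^sup>2 \<and>
          norm (deriv (\<lambda>w. w + complex_of_real lam * \<eta> * w\<^sup>2) z) = 1 + 2 * lam * norm z"
proof (intro exI conjI)
  define \<eta> where "\<eta> = cnj z / of_real (norm z)"
  have nz: "norm z \<noteq> 0" using z by simp
  have ez: "\<eta> * z = of_real (norm z)"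
    using nz by (simp add: \<eta>_def complex_norm_square[symmetric] power2_eq_square field_simps)
  show n1: "norm \<eta> = 1" using nz by (simp add: \<eta>_def norm_divide)
  show "(\<lambda>w. w + complex_of_real lam * \<eta> * w\<^sup>2) \<in> Omega lam" by (rule fam_omega[OF n1])
  have e: "z + complex_of_real lam * \<eta> * z\<^sup>2 = z * of_real (1 + lam * norm z)"
    using ez by (simp add: power2_eq_square algebra_simps)
  have ab: "abs (1 + lam * norm z) = 1 + lam * norm z" using lam by simp
  show "norm (z + complex_of_real lam * \<eta> * z\<^sup>2) = norm z + lam * (norm z)\<^sup>2"
    unfolding e norm_mult norm_of_real ab by (simp add: power2_eq_square algebra_simps)
  have "deriv (\<lambda>w. w + complex_of_real lam * \<eta> * w\<^sup>2) z = 1 + 2 * (complex_of_real lam * \<eta>) * z"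
    by (rule fam_deriv)
  also have "\<dots> = of_real (1 + 2 * lam * norm z)" using ez by (simp add: algebra_simps)
  finally have d: "deriv (\<lambda>w. w + complex_of_real lam * \<eta> * w\<^sup>2) z = of_real (1 + 2 * lam * norm z)" .
  have ab2: "abs (1 + 2 * lam * norm z) = 1 + 2 * lam * norm z" using lam by simp
  show "norm (deriv (\<lambda>w. w + complex_of_real lam * \<eta> * w\<^sup>2) z) = 1 + 2 * lam * norm z"
    unfolding d norm_of_real ab2 ..
qed

theorem theorem4p1:
  fixes lam :: real
  assumes "0 < lam"
  shows "radius_starlikeness (Omega lam) = min 1 (1 / (2 * lam)) \<and>
    (\<forall>f\<in>Omega lam. \<forall>z\<in>ball 0 1.
       norm z - lam * (norm z)\<^sup>2 \<le> norm (f z) \<and> norm (f z) \<le> norm z + lam * (norm z)\<^sup>2 \<and>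
       1 - 2 * lam * norm z \<le> norm (deriv f z) \<and> norm (deriv f z) \<le> 1 + 2 * lam * norm z) \<and>
    (\<forall>f\<in>Omega lam. \<forall>z\<in>ball 0 1. z \<noteq> 0 \<longrightarrow>
       (norm (f z) = norm z - lam * (norm z)\<^sup>2 \<or> norm (f z) = norm z + lam * (norm z)\<^sup>2 \<or>
        norm (deriv f z) = 1 - 2 * lam * norm z \<or> norm (deriv f z) = 1 + 2 * lam * norm z) \<longrightarrow>
       (\<exists>\<eta>. norm \<eta> = 1 \<and> (\<forall>w\<in>ball 0 1. f w = w + complex_of_real lam * \<eta> * w\<^sup>2))) \<and>
    (\<forall>z\<in>ball 0 1. z \<noteq> 0 \<longrightarrow>
       (\<exists>\<eta>. norm \<eta> = 1 \<and> (\<lambda>w. w + complex_of_real lam * \<eta> * w\<^sup>2) \<in> Omega lam \<and>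
          norm (z + complex_of_real lam * \<eta> * z\<^sup>2) = norm z + lam * (norm z)\<^sup>2 \<and>
          norm (deriv (\<lambda>w. w + complex_of_real lam * \<eta> * w\<^sup>2) z) = 1 + 2 * lam * norm z))"
proof (intro conjI ballI impI)
  show "radius_starlikeness (Omega lam) = min 1 (1 / (2 * lam))" by (rule radius_main[OF assms])
next
  fix f z assume "f \<in> Omega lam" "(z::complex) \<in> ball 0 1"
  note A = omega_all[OF this(1) assms this(2)]
  show "norm z - lam * (norm z)\<^sup>2 \<le> norm (f z)" using A(1) by blast
  show "norm (f z) \<le> norm z + lam * (norm z)\<^sup>2" using A(1) by blast
  show "1 - 2 * lam * norm z \<le> norm (deriv f z)" using A(1) by blast
  show "norm (deriv f z) \<le> 1 + 2 * lam * norm z" using A(1) by blast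
next
  fix f z assume "f \<in> Omega lam" "(z::complex) \<in> ball 0 1" "z \<noteq> 0"
    "norm (f z) = norm z - lam * (norm z)\<^sup>2 \<or> norm (f z) = norm z + lam * (norm z)\<^sup>2 \<or>
        norm (deriv f z) = 1 - 2 * lam * norm z \<or> norm (deriv f z) = 1 + 2 * lam * norm z"
  then show "\<exists>\<eta>. norm \<eta> = 1 \<and> (\<forall>w\<in>ball 0 1. f w = w + complex_of_real lam * \<eta> * w\<^sup>2)"
    using omega_all(2)[OF _ assms] by blast
next
  fix z :: complex assume "z \<in> ball 0 1" "z \<noteq> 0"
  then show "\<exists>\<eta>. norm \<eta> = 1 \<and> (\<lambda>w. w + complex_of_real lam * \<eta> * w\<^sup>2) \<in> Omega lam \<and>
          norm (z + complex_of_real lam * \<eta> * z\<^sup>2) = norm z + lam * (norm z)\<^sup>2 \<and>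
          norm (deriv (\<lambda>w. w + complex_of_real lam * \<eta> * w\<^sup>2) z) = 1 + 2 * lam * norm z"
    by (rule extremal[OF assms])
qed

end
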